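(* Fix $\lambda_p,\lambda_s\in(0,1)$ and $p_a\in(0,1]$. On the set of $p_q\in(0,1)$ for which $(\lambda_p,\lambda_s)$ is in the stable region, i.e. $\lambda_p<\frac{f_{sd}(1-p_q)\mu_p}{f_{sd}(1-p_q)+p_a f_{ps}(1-f_{pd})}$ and $\lambda_s<p_q f_{sd}(1-\lambda_p/\mu_p)$ with $\mu_p=f_{pd}+p_a f_{ps}(1-f_{pd})$, the average PU delay $D_p$ is monotonically increasing in $p_q$ and the average SU delay $D_s$ is monotonically decreasing in $p_q$.
   Context: Constants $f_{pd},f_{ps},f_{sd}\in(0,1)$ with $f_{pd}<f_{sd}$. Set $a=p_a f_{ps}(1-f_{pd})$, $\mu_p=f_{pd}+a$. $D_p=(N_p+N_{sp})/\lambda_p$ and $D_s=N_s/\lambda_s$, where $N_p=\frac{\lambda_p-\lambda_p^2}{\mu_p-\lambda_p}$, $N_{sp}=\frac{m\lambda_p^2+n\lambda_p}{\alpha\lambda_p^2+\beta\lambda_p+\gamma}$, $N_s=\frac{\lambda_p\lambda_s A+(\lambda_s^2-\lambda_s)B(B+\lambda_p)}{BC}$ with $m=a\big[\frac{(1-p_q)f_{sd}-f_{pd}}{\mu_p}-(1-p_q)f_{sd}-a\big]$, $n=a\mu_p$, $\alpha=(1-p_q)f_{sd}+a$, $\beta=\mu_p[-2(1-p_q)f_{sd}-a]$, $\gamma=(1-p_q)f_{sd}\mu_p^2$, $A=p_q f_{sd}(\mu_p-1)$, $B=\mu_p-\lambda_p$, $C=(\lambda_s-p_q f_{sd})\mu_p+p_q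 f_{sd}\lambda_p$. These are the average packet delays of the PU and SU in a cognitive relaying system where the SU serves its own queue w.p. $p_q$ (relay queue w.p. $1-p_q$) when the PU is idle, and admits undelivered overheard PU packets to its relay queue w.p. $p_a$. *)

theory Defs
  imports Complex_Main
begin

text \<open>Parameters: fpd fps fsd (channel success probabilities), pa (admission prob.),
  pq (SU own-queue prob.), lp = lambda_p, ls = lambda_s.\<close>

definition a_par :: "real \<Rightarrow> real \<Rightarrow> real \<Rightarrow> real" where
  "a_par fpd fps pa = pa * fps * (1 - fpd)"

definition mu_p :: "real \<Rightarrow> real \<Rightarrow> real \<Rightarrow> real" where
  "mu_p fpd fps pa = fpd + a_par fpd fps pa"

definition N_p :: "real \<Rightarrow> real \<Rightarrow> real \<Rightarrow> real \<Rightarrow> real" where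
  "N_p fpd fps pa lp = (lp - lp^2) / (mu_p fpd fps pa - lp)"

definition N_sp :: "real \<Rightarrow> real \<Rightarrow> real \<Rightarrow> real \<Rightarrow> real \<Rightarrow> real \<Rightarrow> real" where
  "N_sp fpd fps fsd pa pq lp =
    (let a = a_par fpd fps pa; mu = mu_p fpd fps pa;
         m = a * (((1 - pq) * fsd - fpd) / mu - (1 - pq) * fsd - a);
         n = a * mu;
         \<alpha> = (1 - pq) * fsd + a;
         \<beta> = mu * (- 2 * (1 - pq) * fsd - a);
         \<gamma> = (1 - pq) * fsd * mu^2
     in (m * lp^2 + n * lp) / (\<alpha> * lp^2 + \<beta> * lp + \<gamma>))"

definition D_p :: "real \<Rightarrow> real \<Rightarrow> real \<Rightarrow> real \<Rightarrow> real \<Rightarrow> real \<Rightarrow> real" where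
  "D_p fpd fps fsd pa pq lp = (N_p fpd fps pa lp + N_sp fpd fps fsd pa pq lp) / lp"

definition N_s :: "real \<Rightarrow> real \<Rightarrow> real \<Rightarrow> real \<Rightarrow> real \<Rightarrow> real \<Rightarrow> real \<Rightarrow> real" where
  "N_s fpd fps fsd pa pq lp ls =
    (let mu = mu_p fpd fps pa;
         A = pq * fsd * (mu - 1);
         B = mu - lp;
         C = (ls - pq * fsd) * mu + pq * fsd * lp
     in (lp * ls * A + (ls^2 - ls) * B * (B + lp)) / (B * C))"

definition D_s :: "real \<Rightarrow> real \<Rightarrow> real \<Rightarrow> real \<Rightarrow> real \<Rightarrow> real \<Rightarrow> real \<Rightarrow> real" where
  "D_s fpd fps fsd pa pq lp ls = N_s fpd fps fsd pa pq lp ls / ls"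

definition stable :: "real \<Rightarrow> real \<Rightarrow> real \<Rightarrow> real \<Rightarrow> real \<Rightarrow> real \<Rightarrow> real \<Rightarrow> bool" where
  "stable fpd fps fsd pa pq lp ls \<longleftrightarrow>
     lp < fsd * (1 - pq) * mu_p fpd fps pa / (fsd * (1 - pq) + pa * fps * (1 - fpd)) \<and>
     ls < pq * fsd * (1 - lp / mu_p fpd fps pa)"

end

theory Submission
  imports Defs
begin

lemma key:
  fixes P Q B L x y :: real
  assumes "0 \<le> P" "0 \<le> Q" "0 < B" "0 \<le> L" "x \<le> y" "L < x*B"
  shows "(P*y+Q)/(y*B-L) \<le> (P*x+Q)/(x*B-L)"
proof -
  have h1: "0 < x*B - L" using assms by simp
  have "x*B \<le> y*B" using assms by (simp add: mult_right_mono)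
  hence h2: "0 < y*B - L" using h1 by simp
  have "0 \<le> (y-x)*(P*L+Q*B)" using assms by (intro mult_nonneg_nonneg) auto
  hence "(P*y+Q)*(x*B-L) \<le> (P*x+Q)*(y*B-L)" by (simp add: algebra_simps)
  thus ?thesis using h1 h2 by (simp add: divide_simps)
qed

lemma Ds_alg:
  fixes mu lp ls q :: real
  assumes "mu - lp \<noteq> 0" "ls \<noteq> 0" "(ls - q)*mu + q*lp \<noteq> 0"
  shows "(lp * ls * (q*(mu-1)) + (ls^2 - ls) * (mu-lp) * ((mu-lp) + lp)) /
           ((mu-lp) * ((ls - q)*mu + q*lp)) / ls =
    (lp*(1-mu)*q + (1-ls)*(mu-lp)*mu) / (q*(mu-lp)^2 - (mu-lp)*ls*mu)"
proof -
  have e: "q*(mu-lp)^2 - (mu-lp)*ls*mu = - ((mu-lp)*((ls - q)*mu + q*lp))"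
    by (simp add: algebra_simps power2_eq_square)
  have nz: "(mu-lp)*((ls - q)*mu + q*lp) \<noteq> 0" using assms by simp
  have x: "lp * ls * (q*(mu-1)) + (ls^2 - ls) * (mu-lp) * ((mu-lp) + lp)
     = - (ls * (lp*(1-mu)*q + (1-ls)*(mu-lp)*mu))"
    by (simp add: algebra_simps power2_eq_square)
  show ?thesis unfolding e x using assms nz
    by (simp add: divide_divide_eq_left)
qed

lemma Ds_form:
  fixes fpd fps fsd pa pq lp ls :: real
  assumes "mu_p fpd fps pa - lp \<noteq> 0" "ls \<noteq> 0"
    "(ls - pq*fsd)*mu_p fpd fps pa + pq*fsd*lp \<noteq> 0"
  shows "D_s fpd fps fsd pa pq lp ls =
    (lp*(1-mu_p fpd fps pa)*(pq*fsd) + (1-ls)*(mu_p fpd fps pa - lp)*mu_p fpd fps pa) /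
     ((pq*fsd)*(mu_p fpd fps pa - lp)^2 - (mu_p fpd fps pa - lp)*ls*mu_p fpd fps pa)"
  unfolding D_s_def N_s_def Let_def
  using Ds_alg[OF assms] by (simp add: mult.assoc)

lemma Nsp_alg:
  fixes a fpd pq fsd lp mu :: real
  assumes "mu \<noteq> 0" "mu = fpd + a"
  shows "((a * (((1 - pq) * fsd - fpd) / mu - (1 - pq) * fsd - a)) * lp^2 + (a * mu) * lp) /
      (((1 - pq) * fsd + a) * lp^2 + (mu * (- 2 * (1 - pq) * fsd - a)) * lp + (1 - pq) * fsd * mu^2)
    = ((a*lp*lp*(1-mu)/mu) * ((1-pq)*fsd) + a*lp*(mu - lp*a - lp*fpd/mu))
      / (((1-pq)*fsd) * (mu-lp)^2 - (mu-lp)*a*lp)"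
proof -
  have d: "((1 - pq) * fsd + a) * lp^2 + (mu * (- 2 * (1 - pq) * fsd - a)) * lp + (1 - pq) * fsd * mu^2
     = ((1-pq)*fsd) * (mu-lp)^2 - (mu-lp)*a*lp"
    using assms(2) by (simp add: algebra_simps power2_eq_square)
  have n: "(a * (((1 - pq) * fsd - fpd) / mu - (1 - pq) * fsd - a)) * lp^2 + (a * mu) * lp
     = (a*lp*lp*(1-mu)/mu) * ((1-pq)*fsd) + a*lp*(mu - lp*a - lp*fpd/mu)"
    using assms(1) by (simp add: field_simps power2_eq_square)
  show ?thesis unfolding d n ..
qed

lemma Nsp_form:
  assumes "mu_p fpd fps pa \<noteq> 0"
  shows "N_sp fpd fps fsd pa pq lp =
   ((a_par fpd fps pa*lp*lp*(1-mu_p fpd fps pa)/mu_p fpd fps pa) * ((1-pq)*fsd)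
     + a_par fpd fps pa*lp*(mu_p fpd fps pa - lp*a_par fpd fps pa - lp*fpd/mu_p fpd fps pa))
      / (((1-pq)*fsd) * (mu_p fpd fps pa-lp)^2 - (mu_p fpd fps pa-lp)*a_par fpd fps pa*lp)"
proof -
  have "mu_p fpd fps pa = fpd + a_par fpd fps pa" by (simp add: mu_p_def)
  from Nsp_alg[OF assms this, of pq fsd lp] show ?thesis
  unfolding N_sp_def Let_def by simp
qed

theorem lemma3:
  fixes fpd fps fsd pa lp ls :: real
  assumes "0 < fpd" "fpd < 1" "0 < fps" "fps < 1" "0 < fsd" "fsd < 1" "fpd < fsd"
    and "0 < lp" "lp < 1" "0 < ls" "ls < 1" "0 < pa" "pa \<le> 1"
  defines "S \<equiv> {pq. 0 < pq \<and> pq < 1 \<and> stable fpd fps fsd pa pq lp ls}"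
  shows "mono_on S (\<lambda>pq. D_p fpd fps fsd pa pq lp) \<and>
         antimono_on S (\<lambda>pq. D_s fpd fps fsd pa pq lp ls)"
proof -
  define a where "a = a_par fpd fps pa"
  define mu where "mu = mu_p fpd fps pa"
  have mua: "mu = fpd + a" unfolding mu_def a_def mu_p_def by simp
  have a0: "0 < a" unfolding a_def a_par_def using assms by simp
  have "pa * fps \<le> 1 * fps" using assms by (intro mult_right_mono) auto
  hence "pa * fps < 1" using assms(4) by linarith
  hence a1: "a < 1 - fpd" unfolding a_def a_par_def using assms by simp
  have mu0: "0 < mu" and mu1: "mu < 1" using mua a0 a1 assms by auto
  have stS: "0 < x \<and> x < 1 \<and> lp < fsd * (1 - x) * mu / (fsd * (1 - x) + a) \<and>
       ls < x * fsd * (1 - lp / mu)" if "x \<in> S" for x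
  proof -
    have "x \<in> S" by fact
    hence "0 < x \<and> x < 1 \<and> stable fpd fps fsd pa x lp ls" unfolding S_def by simp
    thus ?thesis unfolding stable_def mu_def[symmetric] a_def a_par_def by (simp only: mult.assoc)
  qed
  have facts: "0 < (1-x)*fsd \<and> 0 < mu - lp \<and> (mu-lp)*a*lp < ((1-x)*fsd)*(mu-lp)^2
     \<and> (mu-lp)*ls*mu < (x*fsd)*(mu-lp)^2" if "x \<in> S" for x
  proof -
    note h = stS[OF that]
    have r0: "0 < (1-x)*fsd" using h assms by simp
    have ra: "0 < fsd * (1 - x) + a" using r0 a0 by (simp add: mult.commute)
    have "lp * (fsd * (1 - x) + a) < fsd * (1 - x) * mu" using h ra by (simp add: pos_less_divide_eq)
    hence i1: "a*lp < ((1-x)*fsd)*(mu-lp)" by (simp add: algebra_simps)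
    have ml: "0 < mu - lp"
    proof (rule ccontr)
      assume "\<not> 0 < mu - lp"
      hence "((1-x)*fsd)*(mu-lp) \<le> 0" using r0 by (intro mult_nonneg_nonpos) auto
      moreover have "0 < a*lp" using a0 assms(8) by simp
      ultimately show False using i1 by simp
    qed
    have "(mu-lp)*(a*lp) < (mu-lp)*(((1-x)*fsd)*(mu-lp))" using i1 ml by simp
    hence i2: "(mu-lp)*a*lp < ((1-x)*fsd)*(mu-lp)^2" by (simp add: algebra_simps power2_eq_square)
    have "ls * mu < x * fsd * (1 - lp / mu) * mu" using h mu0 by simp
    also have "x * fsd * (1 - lp / mu) * mu = x*fsd*(mu-lp)" using mu0 by (simp add: field_simps)
    finally have "ls*mu < x*fsd*(mu-lp)" .
    hence "(mu-lp)*(ls*mu) < (mu-lp)*(x*fsd*(mu-lp))" using ml by simp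
    hence "(mu-lp)*ls*mu < (x*fsd)*(mu-lp)^2" by (simp add: algebra_simps power2_eq_square)
    thus ?thesis using r0 ml i2 by simp
  qed
  have c0: "0 < mu - lp*a - lp*fpd/mu" if "lp < mu"
  proof -
    have "lp*a + lp*fpd/mu < mu*a + mu*fpd/mu"
      using that a0 assms mu0 by (intro add_strict_mono mult_strict_right_mono divide_strict_right_mono) auto
    also have "\<dots> < mu"
    proof -
      have "mu*fpd/mu = fpd" using mu0 by simp
      moreover have "mu*a < 1*a" using mu1 a0 by (intro mult_strict_right_mono) auto
      ultimately show ?thesis using mua by linarith
    qed
    finally show ?thesis by simp
  qed
  have P1: "mono_on S (\<lambda>pq. D_p fpd fps fsd pa pq lp)"
  proof (rule mono_onI)
    fix x y assume xS: "x \<in> S" and yS: "y \<in> S" and xy: "x \<le> y"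
    note fx = facts[OF xS] and fy = facts[OF yS]
    have "((a*lp*lp*(1-mu)/mu) * ((1-x)*fsd) + a*lp*(mu - lp*a - lp*fpd/mu))
      / (((1-x)*fsd) * (mu-lp)^2 - (mu-lp)*a*lp) \<le>
       ((a*lp*lp*(1-mu)/mu) * ((1-y)*fsd) + a*lp*(mu - lp*a - lp*fpd/mu))
      / (((1-y)*fsd) * (mu-lp)^2 - (mu-lp)*a*lp)"
    proof (rule key)
      have lm: "lp < mu" using fx by simp
      show "0 \<le> a*lp*lp*(1-mu)/mu" using a0 assms mu0 mu1 by simp
      show "0 \<le> a*lp*(mu - lp*a - lp*fpd/mu)" using c0[OF lm] a0 assms by simp
      show "0 < (mu-lp)^2" using lm by simp
      show "0 \<le> (mu-lp)*a*lp" using lm a0 assms by simp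
      show "(1-y)*fsd \<le> (1-x)*fsd" using xy assms by (simp add: mult_right_mono)
      show "(mu-lp)*a*lp < ((1-y)*fsd)*(mu-lp)^2" using fy by simp
    qed
    hence "N_sp fpd fps fsd pa x lp \<le> N_sp fpd fps fsd pa y lp"
      using Nsp_form[of fpd fps pa fsd x lp, folded mu_def a_def]
        Nsp_form[of fpd fps pa fsd y lp, folded mu_def a_def] mu0 by simp
    thus "D_p fpd fps fsd pa x lp \<le> D_p fpd fps fsd pa y lp"
      unfolding D_p_def using assms by (simp add: divide_right_mono)
  qed
  have P2: "antimono_on S (\<lambda>pq. D_s fpd fps fsd pa pq lp ls)"
  proof (rule monotone_onI)
    fix x y assume xS: "x \<in> S" and yS: "y \<in> S" and xy: "x \<le> y"
    note fx = facts[OF xS] and fy = facts[OF yS]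
    have le: "(lp*(1-mu)*(y*fsd) + (1-ls)*(mu-lp)*mu) / ((y*fsd)*(mu-lp)^2 - (mu-lp)*ls*mu)
       \<le> (lp*(1-mu)*(x*fsd) + (1-ls)*(mu-lp)*mu) / ((x*fsd)*(mu-lp)^2 - (mu-lp)*ls*mu)"
    proof (rule key)
      have lm: "lp < mu" using fx by simp
      show "0 \<le> lp*(1-mu)" using assms mu1 by simp
      show "0 \<le> (1-ls)*(mu-lp)*mu" using lm assms mu0 by simp
      show "0 < (mu-lp)^2" using lm by simp
      show "0 \<le> (mu-lp)*ls*mu" using lm assms mu0 by simp
      show "x*fsd \<le> y*fsd" using xy assms by (simp add: mult_right_mono)
      show "(mu-lp)*ls*mu < (x*fsd)*(mu-lp)^2" using fx by simp
    qed
    have Cnz: "(ls - z*fsd)*mu + z*fsd*lp \<noteq> 0" if "(mu-lp)*ls*mu < (z*fsd)*(mu-lp)^2" "0 < mu - lp"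
      for z
    proof -
      have "(mu-lp)*(ls*mu) < (mu-lp)*(z*fsd*(mu-lp))" using that(1) by (simp add: algebra_simps power2_eq_square)
      hence "ls*mu < z*fsd*(mu-lp)" using that(2) by simp
      thus ?thesis by (simp add: algebra_simps)
    qed
    have ex: "D_s fpd fps fsd pa x lp ls = (lp*(1-mu)*(x*fsd) + (1-ls)*(mu-lp)*mu) / ((x*fsd)*(mu-lp)^2 - (mu-lp)*ls*mu)"
      using Ds_form[of fpd fps pa lp ls x fsd] fx assms Cnz[of x] unfolding mu_def by simp
    have ey: "D_s fpd fps fsd pa y lp ls = (lp*(1-mu)*(y*fsd) + (1-ls)*(mu-lp)*mu) / ((y*fsd)*(mu-lp)^2 - (mu-lp)*ls*mu)"
      using Ds_form[of fpd fps pa lp ls y fsd] fy assms Cnz[of y] unfolding mu_def by simp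
    show "D_s fpd fps fsd pa y lp ls \<le> D_s fpd fps fsd pa x lp ls"
      unfolding ex ey by fact
  qed
  show ?thesis using P1 P2 by simp
qed

end
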